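(* Let $n\ge 2$ and let $F$ be the free loop on $n$ generators $x_1,\dots,x_n$. Then $\gamma_{n-1}\mathrm{LMlt}(F/F_3)$ is non-trivial.
   Context: A loop is a set with a product and two-sided identity in which all left and right multiplications are bijective; $\mathrm{LMlt}(L)$ is the group of permutations of $L$ generated by the left multiplications $L_a\colon x\mapsto ax$. For a group $G$, $\gamma_1G=G$ and $\gamma_{k+1}G=[G,\gamma_kG]$. For a loop $F$ and a normal subloop $N$, $[N,F]$ denotes the smallest subloop of $N$ which is normal in $F$ and such that $N/[N,F]$ is contained in the centre of $F/[N,F]$. Bruck's lower central series is $F_1=F$, $F_{k+1}=[F_k,F]$. *)

theory Defs
  imports "HOL-Algebra.Algebra"
begin

definition is_loop :: "'a monoid \<Rightarrow> bool" where
  "is_loop L \<longleftrightarrow>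
     \<one>\<^bsub>L\<^esub> \<in> carrier L \<and>
     (\<forall>x\<in>carrier L. \<forall>y\<in>carrier L. x \<otimes>\<^bsub>L\<^esub> y \<in> carrier L) \<and>
     (\<forall>x\<in>carrier L. \<one>\<^bsub>L\<^esub> \<otimes>\<^bsub>L\<^esub> x = x \<and> x \<otimes>\<^bsub>L\<^esub> \<one>\<^bsub>L\<^esub> = x) \<and>
     (\<forall>a\<in>carrier L. bij_betw (\<lambda>x. a \<otimes>\<^bsub>L\<^esub> x) (carrier L) (carrier L)) \<and>
     (\<forall>a\<in>carrier L. bij_betw (\<lambda>x. x \<otimes>\<^bsub>L\<^esub> a) (carrier L) (carrier L))"

definition subloop :: "'a set \<Rightarrow> 'a monoid \<Rightarrow> bool" where
  "subloop N L \<longleftrightarrow> N \<subseteq> carrier L \<and> \<one>\<^bsub>L\<^esub> \<in> N \<and>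
     (\<forall>a\<in>N. \<forall>b\<in>N. a \<otimes>\<^bsub>L\<^esub> b \<in> N) \<and>
     (\<forall>a\<in>N. \<forall>b\<in>N. \<forall>x\<in>carrier L. a \<otimes>\<^bsub>L\<^esub> x = b \<longrightarrow> x \<in> N) \<and>
     (\<forall>a\<in>N. \<forall>b\<in>N. \<forall>x\<in>carrier L. x \<otimes>\<^bsub>L\<^esub> a = b \<longrightarrow> x \<in> N)"

definition lcos :: "'a monoid \<Rightarrow> 'a \<Rightarrow> 'a set \<Rightarrow> 'a set" where
  "lcos L x N = (\<lambda>n. x \<otimes>\<^bsub>L\<^esub> n) ` N"

definition rcos :: "'a monoid \<Rightarrow> 'a set \<Rightarrow> 'a \<Rightarrow> 'a set" where
  "rcos L N x = (\<lambda>n. n \<otimes>\<^bsub>L\<^esub> x) ` N"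

definition normal_subloop :: "'a set \<Rightarrow> 'a monoid \<Rightarrow> bool" where
  "normal_subloop N L \<longleftrightarrow> subloop N L \<and>
     (\<forall>x\<in>carrier L. \<forall>y\<in>carrier L.
        lcos L x N = rcos L N x \<and>
        rcos L (lcos L x N) y = lcos L x (rcos L N y) \<and>
        lcos L x (lcos L y N) = lcos L (x \<otimes>\<^bsub>L\<^esub> y) N)"

definition loop_centre :: "'a monoid \<Rightarrow> 'a set" where
  "loop_centre L = {z \<in> carrier L. \<forall>x\<in>carrier L. \<forall>y\<in>carrier L.
      z \<otimes>\<^bsub>L\<^esub> x = x \<otimes>\<^bsub>L\<^esub> z \<and>
      (z \<otimes>\<^bsub>L\<^esub> x) \<otimes>\<^bsub>L\<^esub> y = z \<otimes>\<^bsub>L\<^esub> (x \<otimes>\<^bsub>L\<^esub> y) \<and>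
      (x \<otimes>\<^bsub>L\<^esub> z) \<otimes>\<^bsub>L\<^esub> y = x \<otimes>\<^bsub>L\<^esub> (z \<otimes>\<^bsub>L\<^esub> y) \<and>
      (x \<otimes>\<^bsub>L\<^esub> y) \<otimes>\<^bsub>L\<^esub> z = x \<otimes>\<^bsub>L\<^esub> (y \<otimes>\<^bsub>L\<^esub> z)}"

text \<open>Quotient loop L/N: left cosets xN, with product of cosets the set product
  (which is the coset (xy)N when N is normal), identity N.\<close>
definition quot_loop :: "'a monoid \<Rightarrow> 'a set \<Rightarrow> 'a set monoid" where
  "quot_loop L N = \<lparr> carrier = (\<lambda>x. lcos L x N) ` carrier L,
     monoid.mult = (\<lambda>A B. {a \<otimes>\<^bsub>L\<^esub> b | a b. a \<in> A \<and> b \<in> B}),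
     monoid.one = N \<rparr>"

definition loop_comm :: "'a set \<Rightarrow> 'a monoid \<Rightarrow> 'a set" where
  "loop_comm N F = \<Inter> {M. M \<subseteq> N \<and> subloop M F \<and> normal_subloop M F \<and>
      (\<lambda>x. lcos F x M) ` N \<subseteq> loop_centre (quot_loop F M)}"

text \<open>Bruck's lower central series, F_1 = F, F_(k+1) = [F_k, F]; index k \<ge> 1.\<close>
primrec bruck_aux :: "'a monoid \<Rightarrow> nat \<Rightarrow> 'a set" where
  "bruck_aux F 0 = carrier F"
| "bruck_aux F (Suc k) = loop_comm (bruck_aux F k) F"

definition bruck_lcs :: "'a monoid \<Rightarrow> nat \<Rightarrow> 'a set" where
  "bruck_lcs F k = bruck_aux F (k - 1)"

definition LMlt :: "'a monoid \<Rightarrow> ('a \<Rightarrow> 'a) monoid" where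
  "LMlt L = (BijGroup (carrier L))\<lparr> carrier :=
     generate (BijGroup (carrier L))
       ((\<lambda>a. restrict (\<lambda>x. a \<otimes>\<^bsub>L\<^esub> x) (carrier L)) ` carrier L) \<rparr>"

definition grp_comm :: "('a, 'b) monoid_scheme \<Rightarrow> 'a set \<Rightarrow> 'a set \<Rightarrow> 'a set" where
  "grp_comm G A B = generate G
     {x \<otimes>\<^bsub>G\<^esub> y \<otimes>\<^bsub>G\<^esub> inv\<^bsub>G\<^esub> x \<otimes>\<^bsub>G\<^esub> inv\<^bsub>G\<^esub> y | x y. x \<in> A \<and> y \<in> B}"

primrec gamma_aux :: "('a, 'b) monoid_scheme \<Rightarrow> nat \<Rightarrow> 'a set" where
  "gamma_aux G 0 = carrier G"
| "gamma_aux G (Suc k) = grp_comm G (carrier G) (gamma_aux G k)"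

text \<open>gamma_1 G = G, gamma_(k+1) G = [G, gamma_k G]; index k \<ge> 1.\<close>
definition gamma :: "('a, 'b) monoid_scheme \<Rightarrow> nat \<Rightarrow> 'a set" where
  "gamma G k = gamma_aux G (k - 1)"

datatype lterm = Gen nat | E | Mul lterm lterm | LDiv lterm lterm | RDiv lterm lterm

fun gens_below :: "nat \<Rightarrow> lterm \<Rightarrow> bool" where
  "gens_below n (Gen i) = (i < n)"
| "gens_below n E = True"
| "gens_below n (Mul s t) = (gens_below n s \<and> gens_below n t)"
| "gens_below n (LDiv s t) = (gens_below n s \<and> gens_below n t)"
| "gens_below n (RDiv s t) = (gens_below n s \<and> gens_below n t)"

inductive leq :: "lterm \<Rightarrow> lterm \<Rightarrow> bool" where
  refl: "leq s s"
| sym: "leq s t \<Longrightarrow> leq t s"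
| trans: "leq s t \<Longrightarrow> leq t u \<Longrightarrow> leq s u"
| cMul: "leq s s' \<Longrightarrow> leq t t' \<Longrightarrow> leq (Mul s t) (Mul s' t')"
| cLDiv: "leq s s' \<Longrightarrow> leq t t' \<Longrightarrow> leq (LDiv s t) (LDiv s' t')"
| cRDiv: "leq s s' \<Longrightarrow> leq t t' \<Longrightarrow> leq (RDiv s t) (RDiv s' t')"
| idl: "leq (Mul E x) x"
| idr: "leq (Mul x E) x"
| ld1: "leq (LDiv x (Mul x y)) y"
| ld2: "leq (Mul x (LDiv x y)) y"
| rd1: "leq (RDiv (Mul y x) x) y"
| rd2: "leq (Mul (RDiv y x) x) y"

definition lclass :: "lterm \<Rightarrow> lterm set" where
  "lclass t = {s. leq t s}"

text \<open>Free loop on generators x_1..x_n (represented as Gen 0, ..., Gen (n-1)).\<close>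
definition free_loop :: "nat \<Rightarrow> lterm set monoid" where
  "free_loop n = \<lparr> carrier = lclass ` {t. gens_below n t},
     monoid.mult = (\<lambda>A B. lclass (Mul (SOME s. s \<in> A) (SOME t. t \<in> B))),
     monoid.one = lclass E \<rparr>"

end

theory Submission
  imports Defs
begin


locale dloop =
  fixes L :: "'a monoid" (structure) and ld rd :: "'a \<Rightarrow> 'a \<Rightarrow> 'a"
  assumes one_cl: "\<one> \<in> carrier L"
  and m_cl: "x \<in> carrier L \<Longrightarrow> y \<in> carrier L \<Longrightarrow> x \<otimes> y \<in> carrier L"
  and ld_cl: "x \<in> carrier L \<Longrightarrow> y \<in> carrier L \<Longrightarrow> ld x y \<in> carrier L"
  and rd_cl: "x \<in> carrier L \<Longrightarrow> y \<in> carrier L \<Longrightarrow> rd x y \<in> carrier L"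
  and lone: "x \<in> carrier L \<Longrightarrow> \<one> \<otimes> x = x"
  and rone: "x \<in> carrier L \<Longrightarrow> x \<otimes> \<one> = x"
  and ld1: "x \<in> carrier L \<Longrightarrow> y \<in> carrier L \<Longrightarrow> ld x (x \<otimes> y) = y"
  and ld2: "x \<in> carrier L \<Longrightarrow> y \<in> carrier L \<Longrightarrow> x \<otimes> ld x y = y"
  and rd1: "x \<in> carrier L \<Longrightarrow> y \<in> carrier L \<Longrightarrow> rd (y \<otimes> x) x = y"
  and rd2: "x \<in> carrier L \<Longrightarrow> y \<in> carrier L \<Longrightarrow> rd y x \<otimes> x = y"
begin

lemma lcancel: "x \<in> carrier L \<Longrightarrow> a \<in> carrier L \<Longrightarrow> b \<in> carrier L \<Longrightarrow> x \<otimes> a = x \<otimes> b \<Longrightarrow> a = b"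
  by (metis ld1)
lemma rcancel: "x \<in> carrier L \<Longrightarrow> a \<in> carrier L \<Longrightarrow> b \<in> carrier L \<Longrightarrow> a \<otimes> x = b \<otimes> x \<Longrightarrow> a = b"
  by (metis rd1)

definition ncond :: "'a set \<Rightarrow> bool" where
  "ncond N \<longleftrightarrow> (\<forall>x\<in>carrier L. \<forall>y\<in>carrier L. \<forall>m\<in>N.
     rd (x \<otimes> m) x \<in> N \<and> ld x (m \<otimes> x) \<in> N \<and>
     rd (ld x ((x \<otimes> m) \<otimes> y)) y \<in> N \<and> ld x (rd (x \<otimes> (m \<otimes> y)) y) \<in> N \<and>
     ld (x \<otimes> y) (x \<otimes> (y \<otimes> m)) \<in> N \<and> ld y (ld x ((x \<otimes> y) \<otimes> m)) \<in> N)"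

lemma subloopD: assumes "subloop N L"
  shows "N \<subseteq> carrier L" "\<one> \<in> N" "a \<in> N \<Longrightarrow> b \<in> N \<Longrightarrow> a \<otimes> b \<in> N"
   "a \<in> N \<Longrightarrow> b \<in> N \<Longrightarrow> x \<in> carrier L \<Longrightarrow> a \<otimes> x = b \<Longrightarrow> x \<in> N"
   "a \<in> N \<Longrightarrow> b \<in> N \<Longrightarrow> x \<in> carrier L \<Longrightarrow> x \<otimes> a = b \<Longrightarrow> x \<in> N"
  using assms unfolding subloop_def by blast+

lemma ncond_normal:
  assumes sl: "subloop N L" and nc: "ncond N"
  shows "normal_subloop N L"
proof -
  have NC: "N \<subseteq> carrier L" using subloopD(1)[OF sl] .
  { fix x y assume x: "x \<in> carrier L" and y: "y \<in> carrier L"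
    have "lcos L x N = rcos L N x"
    proof (intro equalityI subsetI)
      fix z assume "z \<in> lcos L x N"
      then obtain m where m: "m \<in> N" "z = x \<otimes> m" unfolding lcos_def by auto
      have "z = rd (x \<otimes> m) x \<otimes> x" using m NC x by (simp add: rd2 m_cl subsetD)
      moreover have "rd (x \<otimes> m) x \<in> N" using nc x y m unfolding ncond_def by blast
      ultimately show "z \<in> rcos L N x" unfolding rcos_def by blast
    next
      fix z assume "z \<in> rcos L N x"
      then obtain m where m: "m \<in> N" "z = m \<otimes> x" unfolding rcos_def by auto
      have "z = x \<otimes> ld x (m \<otimes> x)" using m NC x by (simp add: ld2 m_cl subsetD)
      moreover have "ld x (m \<otimes> x) \<in> N" using nc x y m unfolding ncond_def by blast
      ultimately show "z \<in> lcos L x N" unfolding lcos_def by blast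
    qed
    moreover have "rcos L (lcos L x N) y = lcos L x (rcos L N y)"
    proof (intro equalityI subsetI)
      fix z assume "z \<in> rcos L (lcos L x N) y"
      then obtain m where m: "m \<in> N" "z = (x \<otimes> m) \<otimes> y" unfolding lcos_def rcos_def by auto
      let ?m = "rd (ld x ((x \<otimes> m) \<otimes> y)) y"
      have mc: "m \<in> carrier L" using m NC by auto
      have "z = x \<otimes> (?m \<otimes> y)" using m mc x y by (simp add: rd2 ld2 ld_cl m_cl)
      moreover have "?m \<in> N" using nc x y m unfolding ncond_def by blast
      ultimately show "z \<in> lcos L x (rcos L N y)" unfolding lcos_def rcos_def by blast
    next
      fix z assume "z \<in> lcos L x (rcos L N y)"
      then obtain m where m: "m \<in> N" "z = x \<otimes> (m \<otimes> y)" unfolding lcos_def rcos_def by auto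
      let ?m = "ld x (rd (x \<otimes> (m \<otimes> y)) y)"
      have mc: "m \<in> carrier L" using m NC by auto
      have "z = (x \<otimes> ?m) \<otimes> y" using m mc x y by (simp add: rd2 ld2 rd_cl m_cl)
      moreover have "?m \<in> N" using nc x y m unfolding ncond_def by blast
      ultimately show "z \<in> rcos L (lcos L x N) y" unfolding lcos_def rcos_def by blast
    qed
    moreover have "lcos L x (lcos L y N) = lcos L (x \<otimes> y) N"
    proof (intro equalityI subsetI)
      fix z assume "z \<in> lcos L x (lcos L y N)"
      then obtain m where m: "m \<in> N" "z = x \<otimes> (y \<otimes> m)" unfolding lcos_def by auto
      let ?m = "ld (x \<otimes> y) (x \<otimes> (y \<otimes> m))"
      have mc: "m \<in> carrier L" using m NC by auto
      have "z = (x \<otimes> y) \<otimes> ?m" using m mc x y by (simp add: ld2 m_cl)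
      moreover have "?m \<in> N" using nc x y m unfolding ncond_def by blast
      ultimately show "z \<in> lcos L (x \<otimes> y) N" unfolding lcos_def by blast
    next
      fix z assume "z \<in> lcos L (x \<otimes> y) N"
      then obtain m where m: "m \<in> N" "z = (x \<otimes> y) \<otimes> m" unfolding lcos_def by auto
      let ?m = "ld y (ld x ((x \<otimes> y) \<otimes> m))"
      have mc: "m \<in> carrier L" using m NC by auto
      have "z = x \<otimes> (y \<otimes> ?m)" using m mc x y by (simp add: ld2 ld_cl m_cl)
      moreover have "?m \<in> N" using nc x y m unfolding ncond_def by blast
      ultimately show "z \<in> lcos L x (lcos L y N)" unfolding lcos_def by blast
    qed
    ultimately have "lcos L x N = rcos L N x \<and>
        rcos L (lcos L x N) y = lcos L x (rcos L N y) \<and>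
        lcos L x (lcos L y N) = lcos L (x \<otimes> y) N" by blast }
  then show ?thesis using sl unfolding normal_subloop_def by blast
qed

lemma normal_ncond:
  assumes nl: "normal_subloop N L"
  shows "ncond N"
proof -
  have sl: "subloop N L" using nl unfolding normal_subloop_def by blast
  have NC: "N \<subseteq> carrier L" using subloopD(1)[OF sl] .
  have eqs: "\<And>x y. x \<in> carrier L \<Longrightarrow> y \<in> carrier L \<Longrightarrow> lcos L x N = rcos L N x \<and>
        rcos L (lcos L x N) y = lcos L x (rcos L N y) \<and>
        lcos L x (lcos L y N) = lcos L (x \<otimes> y) N"
    using nl unfolding normal_subloop_def by blast
  show ?thesis unfolding ncond_def
  proof (intro ballI conjI)
    fix x y m assume x: "x \<in> carrier L" and y: "y \<in> carrier L" and m: "m \<in> N"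
    have mc: "m \<in> carrier L" using m NC by auto
    note E = eqs[OF x y]
    have "x \<otimes> m \<in> rcos L N x" using E m unfolding lcos_def by auto
    then obtain m' where "m' \<in> N" "x \<otimes> m = m' \<otimes> x" unfolding rcos_def by auto
    then show "rd (x \<otimes> m) x \<in> N" using x NC by (simp add: rd1 subsetD)
    have "m \<otimes> x \<in> lcos L x N" using E m unfolding rcos_def by auto
    then obtain m' where "m' \<in> N" "m \<otimes> x = x \<otimes> m'" unfolding lcos_def by auto
    then show "ld x (m \<otimes> x) \<in> N" using x NC by (simp add: ld1 subsetD)
    have "(x \<otimes> m) \<otimes> y \<in> lcos L x (rcos L N y)" using E m unfolding rcos_def lcos_def by blast
    then obtain m' where "m' \<in> N" "(x \<otimes> m) \<otimes> y = x \<otimes> (m' \<otimes> y)" unfolding lcos_def rcos_def by auto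
    then show "rd (ld x ((x \<otimes> m) \<otimes> y)) y \<in> N" using x y NC by (simp add: rd1 ld1 m_cl subsetD)
    have "x \<otimes> (m \<otimes> y) \<in> rcos L (lcos L x N) y" using E m unfolding rcos_def lcos_def by blast
    then obtain m' where "m' \<in> N" "x \<otimes> (m \<otimes> y) = (x \<otimes> m') \<otimes> y" unfolding lcos_def rcos_def by auto
    then show "ld x (rd (x \<otimes> (m \<otimes> y)) y) \<in> N" using x y NC by (simp add: rd1 ld1 m_cl subsetD)
    have "x \<otimes> (y \<otimes> m) \<in> lcos L (x \<otimes> y) N" using E m unfolding lcos_def by blast
    then obtain m' where "m' \<in> N" "x \<otimes> (y \<otimes> m) = (x \<otimes> y) \<otimes> m'" unfolding lcos_def by auto
    then show "ld (x \<otimes> y) (x \<otimes> (y \<otimes> m)) \<in> N" using x y NC by (simp add: ld1 m_cl subsetD)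
    have "(x \<otimes> y) \<otimes> m \<in> lcos L x (lcos L y N)" using E m unfolding lcos_def by blast
    then obtain m' where "m' \<in> N" "(x \<otimes> y) \<otimes> m = x \<otimes> (y \<otimes> m')" unfolding lcos_def by auto
    then show "ld y (ld x ((x \<otimes> y) \<otimes> m)) \<in> N" using x y NC by (simp add: ld1 m_cl subsetD)
  qed
qed

lemma normal_Inter:
  assumes ne: "\<M> \<noteq> {}" and nm: "\<And>M. M \<in> \<M> \<Longrightarrow> normal_subloop M L"
  shows "normal_subloop (\<Inter>\<M>) L"
proof -
  have sl: "\<And>M. M \<in> \<M> \<Longrightarrow> subloop M L" using nm unfolding normal_subloop_def by blast
  have "subloop (\<Inter>\<M>) L"
    unfolding subloop_def
  proof (intro conjI ballI impI)
    show "\<Inter>\<M> \<subseteq> carrier L" using ne sl subloopD(1) by blast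
    show "\<one> \<in> \<Inter>\<M>" using sl subloopD(2) by blast
    show "\<And>a b. a \<in> \<Inter>\<M> \<Longrightarrow> b \<in> \<Inter>\<M> \<Longrightarrow> a \<otimes> b \<in> \<Inter>\<M>" using sl subloopD(3) by blast
    show "\<And>a b x. a \<in> \<Inter>\<M> \<Longrightarrow> b \<in> \<Inter>\<M> \<Longrightarrow> x \<in> carrier L \<Longrightarrow> a \<otimes> x = b \<Longrightarrow> x \<in> \<Inter>\<M>"
      using sl subloopD(4) by blast
    show "\<And>a b x. a \<in> \<Inter>\<M> \<Longrightarrow> b \<in> \<Inter>\<M> \<Longrightarrow> x \<in> carrier L \<Longrightarrow> x \<otimes> a = b \<Longrightarrow> x \<in> \<Inter>\<M>"
      using sl subloopD(5) by blast
  qed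
  moreover have "ncond (\<Inter>\<M>)"
    using normal_ncond[OF nm] unfolding ncond_def by blast
  ultimately show ?thesis by (rule ncond_normal)
qed

lemma kernel_normal:
  fixes h :: "'a \<Rightarrow> 'b" and qm qld qrd :: "'b \<Rightarrow> 'b \<Rightarrow> 'b" and e :: 'b
  assumes q1: "\<And>p. qm e p = p" and q2: "\<And>p. qm p e = p"
    and q3: "\<And>p q. qld p (qm p q) = q" and q4: "\<And>p q. qm p (qld p q) = q"
    and q5: "\<And>p q. qrd (qm q p) p = q" and q6: "\<And>p q. qm (qrd q p) p = q"
    and hm: "\<And>x y. x \<in> carrier L \<Longrightarrow> y \<in> carrier L \<Longrightarrow> h (x \<otimes> y) = qm (h x) (h y)"
    and h1: "h \<one> = e"
  shows "normal_subloop {x \<in> carrier L. h x = e} L"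
proof -
  let ?K = "{x \<in> carrier L. h x = e}"
  have hld: "\<And>x y. x \<in> carrier L \<Longrightarrow> y \<in> carrier L \<Longrightarrow> h (ld x y) = qld (h x) (h y)"
    by (metis hm ld2 ld_cl q3)
  have hrd: "\<And>x y. x \<in> carrier L \<Longrightarrow> y \<in> carrier L \<Longrightarrow> h (rd x y) = qrd (h x) (h y)"
    by (metis hm rd2 rd_cl q5)
  have qldd: "\<And>p. qld p p = e" by (metis q2 q3)
  have qrdd: "\<And>p. qrd p p = e" by (metis q1 q5)
  have sl: "subloop ?K L" unfolding subloop_def
    using one_cl by (auto simp: m_cl hm q1 q2 h1 simp del: mem_Collect_eq; metis q1 q2)
  have "ncond ?K" unfolding ncond_def
    by (simp add: m_cl ld_cl rd_cl hm hld hrd q1 q2 q3 q4 q5 q6 qldd qrdd)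
  then show ?thesis by (rule ncond_normal[OF sl])
qed

context
  fixes N assumes nN: "normal_subloop N L"
begin

lemma N_sl: "subloop N L" using nN unfolding normal_subloop_def by blast
lemma N_C: "N \<subseteq> carrier L" using subloopD(1)[OF N_sl] .
lemma N_eqs: "x \<in> carrier L \<Longrightarrow> y \<in> carrier L \<Longrightarrow> lcos L x N = rcos L N x \<and>
        rcos L (lcos L x N) y = lcos L x (rcos L N y) \<and>
        lcos L x (lcos L y N) = lcos L (x \<otimes> y) N"
    using nN unfolding normal_subloop_def by blast

lemma lcos_self: assumes m: "m \<in> N" shows "lcos L m N = N"
proof (intro equalityI subsetI)
  fix z assume "z \<in> lcos L m N"
  then show "z \<in> N" unfolding lcos_def using m subloopD(3)[OF N_sl] by auto
next
  fix z assume z: "z \<in> N"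
  have mc: "m \<in> carrier L" "z \<in> carrier L" using m z N_C by auto
  have "ld m z \<in> N" using subloopD(4)[OF N_sl m z] mc by (simp add: ld2 ld_cl)
  moreover have "z = m \<otimes> ld m z" using mc by (simp add: ld2)
  ultimately show "z \<in> lcos L m N" unfolding lcos_def by blast
qed

lemma in_lcos: "x \<in> carrier L \<Longrightarrow> x \<in> lcos L x N"
  unfolding lcos_def using subloopD(2)[OF N_sl] rone by force

lemma lcos_eq_iff: assumes x: "x \<in> carrier L" and y: "y \<in> carrier L"
  shows "lcos L x N = lcos L y N \<longleftrightarrow> ld x y \<in> N"
proof
  assume "lcos L x N = lcos L y N"
  then have "y \<in> lcos L x N" using in_lcos[OF y] by simp
  then obtain m where "m \<in> N" "y = x \<otimes> m" unfolding lcos_def by auto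
  then show "ld x y \<in> N" using x N_C by (auto simp: ld1)
next
  assume m: "ld x y \<in> N"
  have "lcos L y N = lcos L (x \<otimes> ld x y) N" using x y by (simp add: ld2)
  also have "\<dots> = lcos L x (lcos L (ld x y) N)" using N_eqs[OF x ld_cl[OF x y]] by simp
  also have "\<dots> = lcos L x N" using lcos_self[OF m] by simp
  finally show "lcos L x N = lcos L y N" by simp
qed

lemma qmult: assumes x: "x \<in> carrier L" and y: "y \<in> carrier L"
  shows "monoid.mult (quot_loop L N) (lcos L x N) (lcos L y N) = lcos L (x \<otimes> y) N"
proof (unfold quot_loop_def, simp, intro equalityI subsetI)
  fix z assume "z \<in> {a \<otimes> b |a b. a \<in> lcos L x N \<and> b \<in> lcos L y N}"
  then obtain m m' where mm: "m \<in> N" "m' \<in> N" "z = (x \<otimes> m) \<otimes> (y \<otimes> m')"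
    unfolding lcos_def by auto
  have mc: "m \<in> carrier L" "m' \<in> carrier L" using mm N_C by auto
  have xm: "x \<otimes> m \<in> carrier L" using x mc by (simp add: m_cl)
  have "(x \<otimes> m) \<otimes> y \<in> rcos L (lcos L x N) y" unfolding rcos_def lcos_def using mm by blast
  also have "\<dots> = lcos L x (rcos L N y)" using N_eqs[OF x y] by blast
  also have "\<dots> = lcos L x (lcos L y N)" using conjunct1[OF N_eqs[OF y y]] by simp
  also have "\<dots> = lcos L (x \<otimes> y) N" using N_eqs[OF x y] by blast
  finally obtain m'' where m'': "m'' \<in> N" "(x \<otimes> m) \<otimes> y = (x \<otimes> y) \<otimes> m''" unfolding lcos_def by auto
  have "z \<in> lcos L (x \<otimes> m) (lcos L y N)" unfolding lcos_def using mm by blast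
  also have "\<dots> = lcos L ((x \<otimes> m) \<otimes> y) N" using N_eqs[OF xm y] by simp
  also have "\<dots> = lcos L (x \<otimes> y) N"
    using lcos_eq_iff[of "x \<otimes> y" "(x \<otimes> y) \<otimes> m''"] m'' x y N_C
    by (auto simp: m_cl ld1 subsetD)
  finally show "z \<in> lcos L (x \<otimes> y) N" .
next
  fix z assume "z \<in> lcos L (x \<otimes> y) N"
  then have "z \<in> lcos L x (lcos L y N)" using N_eqs[OF x y] by simp
  then obtain b where b: "b \<in> lcos L y N" "z = x \<otimes> b" unfolding lcos_def by auto
  then show "z \<in> {a \<otimes> b |a b. a \<in> lcos L x N \<and> b \<in> lcos L y N}" using in_lcos[OF x] by blast
qed

lemma central_iff: assumes a: "a \<in> carrier L"
  shows "lcos L a N \<in> loop_centre (quot_loop L N) \<longleftrightarrow>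
    (\<forall>x\<in>carrier L. \<forall>y\<in>carrier L. ld (a \<otimes> x) (x \<otimes> a) \<in> N \<and>
       ld ((a \<otimes> x) \<otimes> y) (a \<otimes> (x \<otimes> y)) \<in> N \<and>
       ld ((x \<otimes> a) \<otimes> y) (x \<otimes> (a \<otimes> y)) \<in> N \<and>
       ld ((x \<otimes> y) \<otimes> a) (x \<otimes> (y \<otimes> a)) \<in> N)"
proof -
  have car: "carrier (quot_loop L N) = (\<lambda>x. lcos L x N) ` carrier L" by (simp add: quot_loop_def)
  have "lcos L a N \<in> loop_centre (quot_loop L N) \<longleftrightarrow>
    (\<forall>x\<in>carrier L. \<forall>y\<in>carrier L.
      lcos L (a \<otimes> x) N = lcos L (x \<otimes> a) N \<and>
      lcos L ((a \<otimes> x) \<otimes> y) N = lcos L (a \<otimes> (x \<otimes> y)) N \<and>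
      lcos L ((x \<otimes> a) \<otimes> y) N = lcos L (x \<otimes> (a \<otimes> y)) N \<and>
      lcos L ((x \<otimes> y) \<otimes> a) N = lcos L (x \<otimes> (y \<otimes> a)) N)"
    unfolding loop_centre_def car using a by (auto simp: qmult m_cl)
  also have "\<dots> \<longleftrightarrow> (\<forall>x\<in>carrier L. \<forall>y\<in>carrier L. ld (a \<otimes> x) (x \<otimes> a) \<in> N \<and>
       ld ((a \<otimes> x) \<otimes> y) (a \<otimes> (x \<otimes> y)) \<in> N \<and>
       ld ((x \<otimes> a) \<otimes> y) (x \<otimes> (a \<otimes> y)) \<in> N \<and>
       ld ((x \<otimes> y) \<otimes> a) (x \<otimes> (y \<otimes> a)) \<in> N)" using a by (simp add: lcos_eq_iff m_cl)
  finally show ?thesis .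
qed

end

end


lemma leq_class_eq: "lclass s = lclass t \<longleftrightarrow> leq s t"
proof
  assume "lclass s = lclass t"
  then have "t \<in> lclass s" by (simp add: lclass_def leq.refl)
  then show "leq s t" by (simp add: lclass_def)
next
  assume st: "leq s t"
  show "lclass s = lclass t" unfolding lclass_def
    using st by (auto intro: leq.trans leq.sym)
qed

lemma some_class: "leq t (SOME u. u \<in> lclass t)"
proof -
  have "t \<in> lclass t" by (simp add: lclass_def leq.refl)
  then have "(SOME u. u \<in> lclass t) \<in> lclass t" by (rule someI)
  then show ?thesis by (simp add: lclass_def)
qed

definition ldF :: "lterm set \<Rightarrow> lterm set \<Rightarrow> lterm set" where
  "ldF A B = lclass (LDiv (SOME s. s \<in> A) (SOME t. t \<in> B))"
definition rdF :: "lterm set \<Rightarrow> lterm set \<Rightarrow> lterm set" where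
  "rdF A B = lclass (RDiv (SOME s. s \<in> A) (SOME t. t \<in> B))"

lemma F_mult: "monoid.mult (free_loop n) (lclass s) (lclass t) = lclass (Mul s t)"
  unfolding free_loop_def by (simp add: leq_class_eq leq.sym leq.cMul some_class)
lemma F_ld: "ldF (lclass s) (lclass t) = lclass (LDiv s t)"
  unfolding ldF_def by (simp add: leq_class_eq leq.sym leq.cLDiv some_class)
lemma F_rd: "rdF (lclass s) (lclass t) = lclass (RDiv s t)"
  unfolding rdF_def by (simp add: leq_class_eq leq.sym leq.cRDiv some_class)
lemma F_one: "\<one>\<^bsub>free_loop n\<^esub> = lclass E" by (simp add: free_loop_def)
lemma F_carrier: "carrier (free_loop n) = lclass ` {t. gens_below n t}" by (simp add: free_loop_def)

lemma F_cases: "x \<in> carrier (free_loop n) \<Longrightarrow> (\<And>t. gens_below n t \<Longrightarrow> x = lclass t \<Longrightarrow> P) \<Longrightarrow> P"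
  unfolding F_carrier by blast

lemma F_in: "gens_below n t \<Longrightarrow> lclass t \<in> carrier (free_loop n)"
  unfolding F_carrier by blast

lemma F_ax1: "x \<in> carrier (free_loop n) \<Longrightarrow> \<one>\<^bsub>free_loop n\<^esub> \<otimes>\<^bsub>free_loop n\<^esub> x = x"
  by (erule F_cases) (simp add: F_mult F_one leq_class_eq leq.idl)
lemma F_ax2: "x \<in> carrier (free_loop n) \<Longrightarrow> x \<otimes>\<^bsub>free_loop n\<^esub> \<one>\<^bsub>free_loop n\<^esub> = x"
  by (erule F_cases) (simp add: F_mult F_one leq_class_eq leq.idr)
lemma F_ax3: "x \<in> carrier (free_loop n) \<Longrightarrow> y \<in> carrier (free_loop n) \<Longrightarrow> ldF x (x \<otimes>\<^bsub>free_loop n\<^esub> y) = y"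
  by (erule F_cases, erule F_cases) (simp add: F_mult F_ld leq_class_eq leq.ld1)
lemma F_ax4: "x \<in> carrier (free_loop n) \<Longrightarrow> y \<in> carrier (free_loop n) \<Longrightarrow> x \<otimes>\<^bsub>free_loop n\<^esub> ldF x y = y"
  by (erule F_cases, erule F_cases) (simp add: F_mult F_ld leq_class_eq leq.ld2)
lemma F_ax5: "x \<in> carrier (free_loop n) \<Longrightarrow> y \<in> carrier (free_loop n) \<Longrightarrow> rdF (y \<otimes>\<^bsub>free_loop n\<^esub> x) x = y"
  by (erule F_cases, erule F_cases) (simp add: F_mult F_rd leq_class_eq leq.rd1)
lemma F_ax6: "x \<in> carrier (free_loop n) \<Longrightarrow> y \<in> carrier (free_loop n) \<Longrightarrow> rdF y x \<otimes>\<^bsub>free_loop n\<^esub> x = y"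
  by (erule F_cases, erule F_cases) (simp add: F_mult F_rd leq_class_eq leq.rd2)
lemma F_cl1: "x \<in> carrier (free_loop n) \<Longrightarrow> y \<in> carrier (free_loop n) \<Longrightarrow> x \<otimes>\<^bsub>free_loop n\<^esub> y \<in> carrier (free_loop n)"
  by (erule F_cases, erule F_cases) (simp add: F_mult F_in)
lemma F_cl2: "x \<in> carrier (free_loop n) \<Longrightarrow> y \<in> carrier (free_loop n) \<Longrightarrow> ldF x y \<in> carrier (free_loop n)"
  by (erule F_cases, erule F_cases) (simp add: F_ld F_in)
lemma F_cl3: "x \<in> carrier (free_loop n) \<Longrightarrow> y \<in> carrier (free_loop n) \<Longrightarrow> rdF x y \<in> carrier (free_loop n)"
  by (erule F_cases, erule F_cases) (simp add: F_rd F_in)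

lemma F_one_in: "\<one>\<^bsub>free_loop n\<^esub> \<in> carrier (free_loop n)"
  unfolding F_one by (rule F_in) simp

interpretation FL: dloop "free_loop n" ldF rdF
  by unfold_locales (simp_all add: F_one_in F_ax1 F_ax2 F_ax3 F_ax4 F_ax5 F_ax6 F_cl1 F_cl2 F_cl3)

section \<open>The target loop Q\<close>

definition pr :: "nat \<Rightarrow> (nat \<Rightarrow> int) \<Rightarrow> int" where
  "pr m b = (\<Prod>i\<in>{1..m}. b i)"
definition ff :: "nat \<Rightarrow> (nat \<Rightarrow> int) \<Rightarrow> (nat \<Rightarrow> int) \<Rightarrow> int" where
  "ff m a b = a 0 * pr m b"

type_synonym qel = "(nat \<Rightarrow> int) \<times> int"

definition qm :: "nat \<Rightarrow> qel \<Rightarrow> qel \<Rightarrow> qel" where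
  "qm m p q = (\<lambda>i. fst p i + fst q i, snd p + snd q + ff m (fst p) (fst q))"
definition qld :: "nat \<Rightarrow> qel \<Rightarrow> qel \<Rightarrow> qel" where
  "qld m p q = (\<lambda>i. fst q i - fst p i, snd q - snd p - ff m (fst p) (\<lambda>i. fst q i - fst p i))"
definition qrd :: "nat \<Rightarrow> qel \<Rightarrow> qel \<Rightarrow> qel" where
  "qrd m q p = (\<lambda>i. fst q i - fst p i, snd q - snd p - ff m (\<lambda>i. fst q i - fst p i) (fst p))"
definition qe :: qel where "qe = (\<lambda>i. 0, 0)"

lemma pr_zero: "m \<ge> 1 \<Longrightarrow> pr m (\<lambda>i. 0) = 0"
  unfolding pr_def by (rule prod_zero) auto

lemma Q_laws: assumes m: "m \<ge> 1" shows
  "qm m qe p = p" "qm m p qe = p"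
  "qld m p (qm m p q) = q" "qm m p (qld m p q) = q"
  "qrd m (qm m q p) p = q" "qm m (qrd m q p) p = q"
  using pr_zero[OF m]
  by (auto simp: qm_def qld_def qrd_def qe_def ff_def prod_eq_iff)

primrec ev :: "nat \<Rightarrow> lterm \<Rightarrow> qel" where
  "ev m (Gen i) = ((\<lambda>j. if j = i then 1 else 0), 0)"
| "ev m E = qe"
| "ev m (Mul s t) = qm m (ev m s) (ev m t)"
| "ev m (LDiv s t) = qld m (ev m s) (ev m t)"
| "ev m (RDiv s t) = qrd m (ev m s) (ev m t)"

lemma ev_leq: assumes m: "m \<ge> 1" shows "leq s t \<Longrightarrow> ev m s = ev m t"
  by (induction rule: leq.induct) (simp_all add: Q_laws[OF m])



definition hPhi :: "nat \<Rightarrow> lterm set \<Rightarrow> qel" where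
  "hPhi m A = ev m (SOME t. t \<in> A)"

lemma Phi_class: "m \<ge> 1 \<Longrightarrow> hPhi m (lclass t) = ev m t"
  unfolding hPhi_def using ev_leq some_class by metis

lemma Phi_mult: "m \<ge> 1 \<Longrightarrow> P \<in> carrier (free_loop n) \<Longrightarrow> R \<in> carrier (free_loop n) \<Longrightarrow>
   hPhi m (P \<otimes>\<^bsub>free_loop n\<^esub> R) = qm m (hPhi m P) (hPhi m R)"
  by (erule F_cases, erule F_cases) (simp add: F_mult Phi_class)

lemma Phi_one: "m \<ge> 1 \<Longrightarrow> hPhi m \<one>\<^bsub>free_loop n\<^esub> = qe"
  by (simp add: F_one Phi_class)

lemma Phi_ld: assumes m: "m \<ge> 1" and P: "P \<in> carrier (free_loop n)" and R: "R \<in> carrier (free_loop n)"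
  shows "hPhi m (ldF P R) = qld m (hPhi m P) (hPhi m R)"
proof -
  have "hPhi m R = qm m (hPhi m P) (hPhi m (ldF P R))"
    using Phi_mult[OF m P FL.ld_cl[OF P R]] FL.ld2[OF P R] by simp
  then show ?thesis by (simp add: Q_laws[OF m])
qed

definition Wset :: "nat \<Rightarrow> nat \<Rightarrow> lterm set set" where
  "Wset n m = {x \<in> carrier (free_loop n). fst (hPhi m x) = (\<lambda>i. 0)}"
definition Kset :: "nat \<Rightarrow> nat \<Rightarrow> lterm set set" where
  "Kset n m = {x \<in> carrier (free_loop n). hPhi m x = qe}"

lemma W_normal: "m \<ge> 1 \<Longrightarrow> normal_subloop (Wset n m) (free_loop n)"
  unfolding Wset_def
  apply (rule FL.kernel_normal[where qm = "\<lambda>p q i. p i + q i" and qld = "\<lambda>p q i. q i - p i"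
      and qrd = "\<lambda>q p i. q i - p i"])
  by (simp_all add: Phi_mult Phi_one qm_def qe_def)

lemma K_normal: "m \<ge> 1 \<Longrightarrow> normal_subloop (Kset n m) (free_loop n)"
  unfolding Kset_def
  apply (rule FL.kernel_normal[where qm = "qm m" and qld = "qld m" and qrd = "qrd m"])
  by (simp_all add: Phi_mult Phi_one Q_laws)

definition fam :: "nat \<Rightarrow> lterm set set \<Rightarrow> lterm set set set" where
  "fam n N = {M. M \<subseteq> N \<and> subloop M (free_loop n) \<and> normal_subloop M (free_loop n) \<and>
      (\<lambda>x. lcos (free_loop n) x M) ` N \<subseteq> loop_centre (quot_loop (free_loop n) M)}"

lemma lc_fam: "loop_comm N (free_loop n) = \<Inter> (fam n N)"
  unfolding loop_comm_def fam_def ..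

lemma W_fam: assumes m: "m \<ge> 1" shows "Wset n m \<in> fam n (carrier (free_loop n))"
proof -
  note nW = W_normal[OF m, of n]
  have "lcos (free_loop n) a (Wset n m) \<in> loop_centre (quot_loop (free_loop n) (Wset n m))"
    if a: "a \<in> carrier (free_loop n)" for a
    unfolding FL.central_iff[OF nW a]
    using a by (intro ballI) (simp add: Wset_def FL.ld_cl FL.m_cl Phi_ld[OF m, where n=n] Phi_mult[OF m] qld_def qm_def add.commute add.left_commute)
  moreover have "Wset n m \<subseteq> carrier (free_loop n)" by (auto simp: Wset_def)
  ultimately show ?thesis unfolding fam_def using nW FL.N_sl[OF nW] by blast
qed


lemma Q_central: assumes m: "m \<ge> 1" and p: "fst p = (\<lambda>i. 0)" shows
  "qm m p q = qm m q p" "qm m (qm m p x) y = qm m p (qm m x y)"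
  "qm m (qm m x p) y = qm m x (qm m p y)" "qm m (qm m x y) p = qm m x (qm m y p)"
  using p pr_zero[OF m] by (auto simp: qm_def ff_def algebra_simps)

lemma qld_self: "m \<ge> 1 \<Longrightarrow> qld m p p = qe"
  by (metis Q_laws(2) Q_laws(3))

abbreviation "F2 n \<equiv> bruck_aux (free_loop n) 1"
abbreviation "F3 n \<equiv> bruck_aux (free_loop n) 2"

lemma F2_eq: "F2 n = \<Inter> (fam n (carrier (free_loop n)))"
  by (simp add: lc_fam)
lemma F3_eq: "F3 n = \<Inter> (fam n (F2 n))"
  by (simp add: lc_fam numeral_2_eq_2)

lemma fam_normal: "M \<in> fam n N \<Longrightarrow> normal_subloop M (free_loop n)"
  unfolding fam_def by blast

lemma F2_W: "m \<ge> 1 \<Longrightarrow> F2 n \<subseteq> Wset n m"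
  unfolding F2_eq using W_fam by blast

lemma F2_normal: "m \<ge> 1 \<Longrightarrow> normal_subloop (F2 n) (free_loop n)"
  unfolding F2_eq by (rule FL.normal_Inter) (use W_fam fam_normal in blast)+

definition M0 :: "nat \<Rightarrow> nat \<Rightarrow> lterm set set" where
  "M0 n m = F2 n \<inter> Kset n m"

lemma M0_normal: "m \<ge> 1 \<Longrightarrow> normal_subloop (M0 n m) (free_loop n)"
  unfolding M0_def using FL.normal_Inter[of "{F2 n, Kset n m}" n] F2_normal K_normal by auto

lemma M0_fam: assumes m: "m \<ge> 1" shows "M0 n m \<in> fam n (F2 n)"
proof -
  note nM = M0_normal[OF m, of n]
  have F2C: "F2 n \<subseteq> carrier (free_loop n)" using F2_W[OF m, of n] by (auto simp: Wset_def)
  have "lcos (free_loop n) a (M0 n m) \<in> loop_centre (quot_loop (free_loop n) (M0 n m))"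
    if aF: "a \<in> F2 n" for a
  proof -
    have a: "a \<in> carrier (free_loop n)" using aF F2C by auto
    have fa: "fst (hPhi m a) = (\<lambda>i. 0)" using aF F2_W[OF m, of n] by (auto simp: Wset_def)
    show ?thesis unfolding FL.central_iff[OF nM a]
    proof (intro ballI)
      fix x y assume x: "x \<in> carrier (free_loop n)" and y: "y \<in> carrier (free_loop n)"
      let ?u1 = "a \<otimes>\<^bsub>free_loop n\<^esub> x" and ?v1 = "x \<otimes>\<^bsub>free_loop n\<^esub> a"
      let ?u2 = "(a \<otimes>\<^bsub>free_loop n\<^esub> x) \<otimes>\<^bsub>free_loop n\<^esub> y" and ?v2 = "a \<otimes>\<^bsub>free_loop n\<^esub> (x \<otimes>\<^bsub>free_loop n\<^esub> y)"
      let ?u3 = "(x \<otimes>\<^bsub>free_loop n\<^esub> a) \<otimes>\<^bsub>free_loop n\<^esub> y" and ?v3 = "x \<otimes>\<^bsub>free_loop n\<^esub> (a \<otimes>\<^bsub>free_loop n\<^esub> y)"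
      let ?u4 = "(x \<otimes>\<^bsub>free_loop n\<^esub> y) \<otimes>\<^bsub>free_loop n\<^esub> a" and ?v4 = "x \<otimes>\<^bsub>free_loop n\<^esub> (y \<otimes>\<^bsub>free_loop n\<^esub> a)"
      have inF2: "ldF ?u1 ?v1 \<in> F2 n \<and> ldF ?u2 ?v2 \<in> F2 n \<and> ldF ?u3 ?v3 \<in> F2 n \<and> ldF ?u4 ?v4 \<in> F2 n"
        unfolding F2_eq
      proof (intro conjI InterI)
        fix M assume M: "M \<in> fam n (carrier (free_loop n))"
        have "lcos (free_loop n) a M \<in> loop_centre (quot_loop (free_loop n) M)"
          using M a unfolding fam_def by blast
        then have "ldF ?u1 ?v1 \<in> M \<and> ldF ?u2 ?v2 \<in> M \<and> ldF ?u3 ?v3 \<in> M \<and> ldF ?u4 ?v4 \<in> M"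
          unfolding FL.central_iff[OF fam_normal[OF M] a] using x y by blast
        then show "ldF ?u1 ?v1 \<in> M" "ldF ?u2 ?v2 \<in> M" "ldF ?u3 ?v3 \<in> M" "ldF ?u4 ?v4 \<in> M" by auto
      qed
      have inK: "ldF ?u1 ?v1 \<in> Kset n m \<and> ldF ?u2 ?v2 \<in> Kset n m \<and> ldF ?u3 ?v3 \<in> Kset n m \<and> ldF ?u4 ?v4 \<in> Kset n m"
        using a x y
        by (simp add: Kset_def FL.ld_cl FL.m_cl Phi_ld[OF m, where n=n] Phi_mult[OF m, where n=n]
             Q_central[OF m fa] qld_self[OF m])
      show "ldF ?u1 ?v1 \<in> M0 n m \<and> ldF ?u2 ?v2 \<in> M0 n m \<and> ldF ?u3 ?v3 \<in> M0 n m \<and> ldF ?u4 ?v4 \<in> M0 n m"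
        using inF2 inK by (simp add: M0_def)
    qed
  qed
  moreover have "M0 n m \<subseteq> F2 n" by (simp add: M0_def)
  ultimately show ?thesis unfolding fam_def using nM FL.N_sl[OF nM] by blast
qed

lemma F3_K: "m \<ge> 1 \<Longrightarrow> F3 n \<subseteq> Kset n m"
  unfolding F3_eq using M0_fam by (fastforce simp: M0_def)

lemma F3_normal: "m \<ge> 1 \<Longrightarrow> normal_subloop (F3 n) (free_loop n)"
  unfolding F3_eq by (rule FL.normal_Inter) (use M0_fam fam_normal in blast)+



abbreviation "GQ n \<equiv> quot_loop (free_loop n) (F3 n)"
abbreviation "LM n \<equiv> LMlt (GQ n)"

lemma F3n: "normal_subloop (F3 n) (free_loop n)" by (rule F3_normal[of "1::nat"]) simp

lemma QC_eq: "carrier (GQ n) = (\<lambda>x. lcos (free_loop n) x (F3 n)) ` carrier (free_loop n)"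
  by (simp add: quot_loop_def)

lemma G_mult: "x \<in> carrier (free_loop n) \<Longrightarrow> y \<in> carrier (free_loop n) \<Longrightarrow>
  lcos (free_loop n) x (F3 n) \<otimes>\<^bsub>GQ n\<^esub> lcos (free_loop n) y (F3 n) = lcos (free_loop n) (x \<otimes>\<^bsub>free_loop n\<^esub> y) (F3 n)"
  using FL.qmult[OF F3n] by simp

lemma Lmap_bij: assumes A: "A \<in> carrier (GQ n)"
  shows "bij_betw (\<lambda>U. A \<otimes>\<^bsub>GQ n\<^esub> U) (carrier (GQ n)) (carrier (GQ n))"
proof -
  obtain a where a: "a \<in> carrier (free_loop n)" and Aa: "A = lcos (free_loop n) a (F3 n)"
    using A QC_eq by auto
  have NC: "F3 n \<subseteq> carrier (free_loop n)" using FL.N_C[OF F3n] .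
  have lc: "lcos (free_loop n) x (F3 n) \<subseteq> carrier (free_loop n)" if "x \<in> carrier (free_loop n)" for x
    using that NC unfolding lcos_def by (auto simp: FL.m_cl)
  have inj: "inj_on (\<lambda>z. a \<otimes>\<^bsub>free_loop n\<^esub> z) (carrier (free_loop n))"
    unfolding inj_on_def using a FL.lcancel by blast
  show ?thesis
  proof (rule bij_betw_imageI)
    show "inj_on (\<lambda>U. A \<otimes>\<^bsub>GQ n\<^esub> U) (carrier (GQ n))"
    proof (rule inj_onI)
      fix U V assume U: "U \<in> carrier (GQ n)" and V: "V \<in> carrier (GQ n)"
        and eq: "A \<otimes>\<^bsub>GQ n\<^esub> U = A \<otimes>\<^bsub>GQ n\<^esub> V"
      obtain x y where x: "x \<in> carrier (free_loop n)" "U = lcos (free_loop n) x (F3 n)"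
        and y: "y \<in> carrier (free_loop n)" "V = lcos (free_loop n) y (F3 n)" using U V QC_eq by auto
      have "lcos (free_loop n) a (lcos (free_loop n) x (F3 n)) = lcos (free_loop n) a (lcos (free_loop n) y (F3 n))"
        using eq x y a G_mult Aa conjunct2[OF conjunct2[OF FL.N_eqs[OF F3n a x(1)]]] conjunct2[OF conjunct2[OF FL.N_eqs[OF F3n a y(1)]]] by simp
      then have "(\<lambda>z. a \<otimes>\<^bsub>free_loop n\<^esub> z) ` lcos (free_loop n) x (F3 n) = (\<lambda>z. a \<otimes>\<^bsub>free_loop n\<^esub> z) ` lcos (free_loop n) y (F3 n)"
        by (simp add: lcos_def[of _ a])
      then show "U = V" using inj_on_image_eq_iff[OF inj lc[OF x(1)] lc[OF y(1)]] x y by simp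
    qed
    show "(\<lambda>U. A \<otimes>\<^bsub>GQ n\<^esub> U) ` carrier (GQ n) = carrier (GQ n)"
    proof (intro equalityI subsetI)
      fix Z assume "Z \<in> (\<lambda>U. A \<otimes>\<^bsub>GQ n\<^esub> U) ` carrier (GQ n)"
      then obtain x where x: "x \<in> carrier (free_loop n)" "Z = A \<otimes>\<^bsub>GQ n\<^esub> lcos (free_loop n) x (F3 n)"
        using QC_eq by auto
      then show "Z \<in> carrier (GQ n)" using Aa a G_mult QC_eq FL.m_cl by auto
    next
      fix Z assume "Z \<in> carrier (GQ n)"
      then obtain z where z: "z \<in> carrier (free_loop n)" "Z = lcos (free_loop n) z (F3 n)" using QC_eq by auto
      have "Z = A \<otimes>\<^bsub>GQ n\<^esub> lcos (free_loop n) (ldF a z) (F3 n)"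
        using z a Aa G_mult FL.ld_cl FL.ld2 by simp
      moreover have "lcos (free_loop n) (ldF a z) (F3 n) \<in> carrier (GQ n)"
        using QC_eq FL.ld_cl a z by auto
      ultimately show "Z \<in> (\<lambda>U. A \<otimes>\<^bsub>GQ n\<^esub> U) ` carrier (GQ n)" by blast
    qed
  qed
qed

lemma Lset_sub: "(\<lambda>A. restrict (\<lambda>U. A \<otimes>\<^bsub>GQ n\<^esub> U) (carrier (GQ n))) ` carrier (GQ n) \<subseteq> carrier (BijGroup (carrier (GQ n)))"
proof
  fix f assume "f \<in> (\<lambda>A. restrict (\<lambda>U. A \<otimes>\<^bsub>GQ n\<^esub> U) (carrier (GQ n))) ` carrier (GQ n)"
  then obtain A where A: "A \<in> carrier (GQ n)" and f: "f = restrict (\<lambda>U. A \<otimes>\<^bsub>GQ n\<^esub> U) (carrier (GQ n))" by auto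
  have "bij_betw f (carrier (GQ n)) (carrier (GQ n))"
    using Lmap_bij[OF A] unfolding f by (rule bij_betw_cong[THEN iffD1, rotated]) simp
  then show "f \<in> carrier (BijGroup (carrier (GQ n)))" unfolding f by (simp add: BijGroup_def Bij_def)
qed

lemma LM_sub: "subgroup (carrier (LM n)) (BijGroup (carrier (GQ n)))"
  unfolding LMlt_def using group.generate_is_subgroup[OF group_BijGroup Lset_sub] by simp

lemma LM_group: "group (LM n)"
  unfolding LMlt_def
  by (rule subgroup.subgroup_is_group[OF group.generate_is_subgroup[OF group_BijGroup Lset_sub] group_BijGroup])

lemma LM_Bij: "g \<in> carrier (LM n) \<Longrightarrow> g \<in> Bij (carrier (GQ n))"
  using subgroup.subset[OF LM_sub] unfolding BijGroup_def by auto

lemma LM_mult_eq: "monoid.mult (LM n) = monoid.mult (BijGroup (carrier (GQ n)))"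
  unfolding LMlt_def by simp

lemma LM_mult: "g \<in> carrier (LM n) \<Longrightarrow> h \<in> carrier (LM n) \<Longrightarrow> g \<otimes>\<^bsub>LM n\<^esub> h = compose (carrier (GQ n)) g h"
  unfolding LM_mult_eq using LM_Bij[of g n] LM_Bij[of h n] unfolding BijGroup_def by simp

lemma LM_one: "\<one>\<^bsub>LM n\<^esub> = (\<lambda>x\<in>carrier (GQ n). x)"
  unfolding LMlt_def by (simp add: BijGroup_def)

lemma LM_L_in: "A \<in> carrier (GQ n) \<Longrightarrow> restrict (\<lambda>U. A \<otimes>\<^bsub>GQ n\<^esub> U) (carrier (GQ n)) \<in> carrier (LM n)"
  unfolding LMlt_def by (simp add: generate.incl)



definition hbar :: "nat \<Rightarrow> nat \<Rightarrow> lterm set set \<Rightarrow> qel" where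
  "hbar n m U = hPhi m (SOME x. x \<in> carrier (free_loop n) \<and> U = lcos (free_loop n) x (F3 n))"

lemma hbar_lcos: assumes m: "m \<ge> 1" and x: "x \<in> carrier (free_loop n)"
  shows "hbar n m (lcos (free_loop n) x (F3 n)) = hPhi m x"
proof -
  let ?y = "SOME y. y \<in> carrier (free_loop n) \<and> lcos (free_loop n) x (F3 n) = lcos (free_loop n) y (F3 n)"
  have "?y \<in> carrier (free_loop n) \<and> lcos (free_loop n) x (F3 n) = lcos (free_loop n) ?y (F3 n)"
    by (rule someI[of _ x]) (use x in simp)
  then have y: "?y \<in> carrier (free_loop n)" and eq: "lcos (free_loop n) ?y (F3 n) = lcos (free_loop n) x (F3 n)" by auto
  have "ldF ?y x \<in> F3 n" using FL.lcos_eq_iff[OF F3n y x] eq by simp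
  then have "hPhi m (ldF ?y x) = qe" using F3_K[OF m] by (auto simp: Kset_def)
  then have "qld m (hPhi m ?y) (hPhi m x) = qe" using Phi_ld[OF m y x] by simp
  then have "hPhi m x = hPhi m ?y" by (metis Q_laws(2,4) m)
  then show ?thesis unfolding hbar_def by simp
qed

definition cov :: "nat \<Rightarrow> nat \<Rightarrow> (lterm set set \<Rightarrow> lterm set set) \<Rightarrow> (qel \<Rightarrow> qel) \<Rightarrow> (qel \<Rightarrow> qel) \<Rightarrow> bool" where
  "cov n m g Fw Bw \<longleftrightarrow> (\<forall>U\<in>carrier (GQ n). hbar n m (g U) = Fw (hbar n m U)) \<and>
     (\<forall>q. Bw (Fw q) = q) \<and> (\<forall>q. Fw (Bw q) = q)"

lemma LM_fun: "g \<in> carrier (LM n) \<Longrightarrow> U \<in> carrier (GQ n) \<Longrightarrow> g U \<in> carrier (GQ n)"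
  using LM_Bij Bij_imp_funcset by blast

lemma cov_mult: assumes g: "g \<in> carrier (LM n)" and h: "h \<in> carrier (LM n)"
  and cg: "cov n m g Fa Ba" and ch: "cov n m h Fb Bb"
  shows "cov n m (g \<otimes>\<^bsub>LM n\<^esub> h) (Fa \<circ> Fb) (Bb \<circ> Ba)"
  unfolding cov_def LM_mult[OF g h] compose_def comp_def
proof (intro conjI ballI allI)
  fix U assume U: "U \<in> carrier (GQ n)"
  show "hbar n m (restrict (\<lambda>x. g (h x)) (carrier (GQ n)) U) = Fa (Fb (hbar n m U))"
    using cg ch LM_fun[OF h U] U unfolding cov_def by simp
next
  fix q show "Bb (Ba (Fa (Fb q))) = q" using cg ch unfolding cov_def by metis
next
  fix q show "Fa (Fb (Bb (Ba q))) = q" using cg ch unfolding cov_def by metis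
qed

lemma cov_inv: assumes g: "g \<in> carrier (LM n)" and cg: "cov n m g Fw Bw"
  shows "cov n m (inv\<^bsub>LM n\<^esub> g) Bw Fw"
proof -
  interpret grp: group "LM n" by (rule LM_group)
  have ig: "inv\<^bsub>LM n\<^esub> g \<in> carrier (LM n)" using g by simp
  have "g \<otimes>\<^bsub>LM n\<^esub> inv\<^bsub>LM n\<^esub> g = \<one>\<^bsub>LM n\<^esub>" using g by simp
  then have c: "compose (carrier (GQ n)) g (inv\<^bsub>LM n\<^esub> g) = (\<lambda>x\<in>carrier (GQ n). x)"
    using LM_mult[OF g ig] LM_one by simp
  have "hbar n m ((inv\<^bsub>LM n\<^esub> g) U) = Bw (hbar n m U)" if U: "U \<in> carrier (GQ n)" for U
  proof -
    have "g ((inv\<^bsub>LM n\<^esub> g) U) = U" using fun_cong[OF c, of U] U by (simp add: compose_def)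
    then have "hbar n m U = Fw (hbar n m ((inv\<^bsub>LM n\<^esub> g) U))"
      using cg LM_fun[OF ig U] unfolding cov_def by metis
    then show ?thesis using cg unfolding cov_def by metis
  qed
  then show ?thesis using cg unfolding cov_def by blast
qed

lemma cov_cong: "cov n m g Fa Ba \<Longrightarrow> (\<And>q. Fa q = Fb q) \<Longrightarrow> (\<And>q. Ba q = Bb q) \<Longrightarrow> cov n m g Fb Bb"
  unfolding cov_def by simp

lemma cov_L: assumes m: "m \<ge> 1" and a: "a \<in> carrier (free_loop n)"
  shows "cov n m (restrict (\<lambda>U. lcos (free_loop n) a (F3 n) \<otimes>\<^bsub>GQ n\<^esub> U) (carrier (GQ n)))
     (qm m (hPhi m a)) (qld m (hPhi m a))"
  unfolding cov_def
proof (intro conjI ballI allI)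
  fix U assume U: "U \<in> carrier (GQ n)"
  then obtain x where x: "x \<in> carrier (free_loop n)" "U = lcos (free_loop n) x (F3 n)" using QC_eq by auto
  show "hbar n m (restrict (\<lambda>U. lcos (free_loop n) a (F3 n) \<otimes>\<^bsub>GQ n\<^esub> U) (carrier (GQ n)) U) =
      qm m (hPhi m a) (hbar n m U)"
    using U x a by (simp add: G_mult hbar_lcos[OF m] FL.m_cl Phi_mult[OF m])
qed (simp_all add: Q_laws[OF m])

definition Lg :: "nat \<Rightarrow> nat \<Rightarrow> lterm set set \<Rightarrow> lterm set set" where
  "Lg n i = restrict (\<lambda>U. lcos (free_loop n) (lclass (Gen i)) (F3 n) \<otimes>\<^bsub>GQ n\<^esub> U) (carrier (GQ n))"

primrec chain :: "nat \<Rightarrow> nat \<Rightarrow> lterm set set \<Rightarrow> lterm set set" where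
  "chain n 0 = Lg n 0"
| "chain n (Suc k) = Lg n (Suc k) \<otimes>\<^bsub>LM n\<^esub> chain n k \<otimes>\<^bsub>LM n\<^esub> inv\<^bsub>LM n\<^esub> (Lg n (Suc k)) \<otimes>\<^bsub>LM n\<^esub> inv\<^bsub>LM n\<^esub> (chain n k)"

lemma gen_in: "i < n \<Longrightarrow> lclass (Gen i) \<in> carrier (free_loop n)"
  by (rule F_in) simp

lemma Lg_in: "i < n \<Longrightarrow> Lg n i \<in> carrier (LM n)"
  unfolding Lg_def by (rule LM_L_in) (use QC_eq gen_in in auto)

lemma chain_in: "k < n \<Longrightarrow> chain n k \<in> carrier (LM n) \<and> chain n k \<in> gamma_aux (LM n) k"
proof (induction k)
  case 0
  then show ?case using Lg_in by simp
next
  case (Suc k)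
  interpret grp: group "LM n" by (rule LM_group)
  have ih: "chain n k \<in> carrier (LM n)" "chain n k \<in> gamma_aux (LM n) k" using Suc by auto
  have L: "Lg n (Suc k) \<in> carrier (LM n)" using Suc Lg_in by simp
  show ?case
    using ih L by (auto simp: grp_comm_def intro!: generate.incl)
qed

lemma cov_Lg: "m \<ge> 1 \<Longrightarrow> i < n \<Longrightarrow> cov n m (Lg n i) (qm m (ev m (Gen i))) (qld m (ev m (Gen i)))"
  unfolding Lg_def using cov_L[of m "lclass (Gen i)" n] gen_in by (simp add: Phi_class)

lemma cov_comm: assumes x: "x \<in> carrier (LM n)" and y: "y \<in> carrier (LM n)"
  and cx: "cov n m x Fx Bx" and cy: "cov n m y Fy By"
  shows "cov n m (x \<otimes>\<^bsub>LM n\<^esub> y \<otimes>\<^bsub>LM n\<^esub> inv\<^bsub>LM n\<^esub> x \<otimes>\<^bsub>LM n\<^esub> inv\<^bsub>LM n\<^esub> y)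
     (Fx \<circ> Fy \<circ> Bx \<circ> By) (Fy \<circ> Fx \<circ> By \<circ> Bx)"
proof -
  interpret grp: group "LM n" by (rule LM_group)
  have "cov n m (x \<otimes>\<^bsub>LM n\<^esub> y \<otimes>\<^bsub>LM n\<^esub> inv\<^bsub>LM n\<^esub> x \<otimes>\<^bsub>LM n\<^esub> inv\<^bsub>LM n\<^esub> y)
     (((Fx \<circ> Fy) \<circ> Bx) \<circ> By) (Fy \<circ> (Fx \<circ> (By \<circ> Bx)))"
    using cov_mult[OF grp.m_closed[OF grp.m_closed[OF x y] grp.inv_closed[OF x]] grp.inv_closed[OF y]
       cov_mult[OF grp.m_closed[OF x y] grp.inv_closed[OF x] cov_mult[OF x y cx cy] cov_inv[OF x cx]]
       cov_inv[OF y cy]] .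
  then show ?thesis by (rule cov_cong) (simp_all add: cov_def)
qed



definition P :: "nat \<Rightarrow> nat \<Rightarrow> (nat \<Rightarrow> int) \<Rightarrow> int" where
  "P m k b = (\<Prod>j\<in>{k..m}. b j)"

lemma pr_P: "pr m b = P m 1 b" by (simp add: pr_def P_def)

lemma P_other_diff: "i < k \<Longrightarrow> P m k (\<lambda>j. b j - (if j = i then 1 else 0)) = P m k b"
  unfolding P_def by (rule prod.cong) auto
lemma P_other_add: "i < k \<Longrightarrow> P m k (\<lambda>j. (if j = i then 1 else 0) + b j) = P m k b"
  unfolding P_def by (rule prod.cong) auto

lemma P_shift: assumes "k \<le> m"
  shows "P m k (\<lambda>j. b j - (if j = k then 1 else 0)) = P m k b - P m (Suc k) b"
proof -
  have I: "{k..m} = insert k {Suc k..m}" using assms by auto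
  have "P m (Suc k) (\<lambda>j. b j - (if j = k then 1 else 0)) = P m (Suc k) b"
    by (rule P_other_diff) simp
  then show ?thesis unfolding P_def I by (simp add: algebra_simps)
qed

lemma P_empty: "P m (Suc m) b = 1" by (simp add: P_def)

definition T :: "((nat \<Rightarrow> int) \<Rightarrow> int) \<Rightarrow> qel \<Rightarrow> qel" where
  "T g q = (fst q, snd q + g (fst q))"

definition gk :: "nat \<Rightarrow> nat \<Rightarrow> (nat \<Rightarrow> int) \<Rightarrow> int" where
  "gk m k b = (-1)^k * P m (Suc k) b"

lemma base_F: assumes m: "m \<ge> 1" shows
  "(qm m (ev m (Gen 1)) \<circ> qm m (ev m (Gen 0)) \<circ> qld m (ev m (Gen 1)) \<circ> qld m (ev m (Gen 0))) q = T (gk m 1) q"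
  using P_shift[of 1 m] m
  by (simp add: qm_def qld_def ff_def pr_P T_def gk_def P_other_diff P_other_add)

lemma base_B: assumes m: "m \<ge> 1" shows
  "(qm m (ev m (Gen 0)) \<circ> qm m (ev m (Gen 1)) \<circ> qld m (ev m (Gen 0)) \<circ> qld m (ev m (Gen 1))) q = T (\<lambda>b. - gk m 1 b) q"
  using P_shift[of 1 m] m
  by (simp add: qm_def qld_def ff_def pr_P T_def gk_def P_other_diff P_other_add)

lemma step_F: assumes m: "Suc k \<le> m" shows
  "(qm m (ev m (Gen (Suc k))) \<circ> T (gk m k) \<circ> qld m (ev m (Gen (Suc k))) \<circ> T (\<lambda>b. - gk m k b)) q = T (gk m (Suc k)) q"
  using P_shift[OF m] m
  apply (simp add: qm_def qld_def ff_def pr_P T_def gk_def P_other_diff P_other_add)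
  by (simp add: algebra_simps)

lemma step_B: assumes m: "Suc k \<le> m" shows
  "(T (gk m k) \<circ> qm m (ev m (Gen (Suc k))) \<circ> T (\<lambda>b. - gk m k b) \<circ> qld m (ev m (Gen (Suc k)))) q = T (\<lambda>b. - gk m (Suc k) b) q"
  using P_shift[OF m] m
  apply (simp add: qm_def qld_def ff_def pr_P T_def gk_def P_other_diff P_other_add)
  by (simp add: algebra_simps)


lemma chain_cov: "m \<ge> 1 \<Longrightarrow> 1 \<le> k \<Longrightarrow> k \<le> m \<Longrightarrow> k < n \<Longrightarrow>
   cov n m (chain n k) (T (gk m k)) (T (\<lambda>b. - gk m k b))"
proof (induction k)
  case 0 then show ?case by simp
next
  case (Suc k)
  show ?case
  proof (cases "k = 0")
    case True
    have "cov n m (chain n 1) (qm m (ev m (Gen 1)) \<circ> qm m (ev m (Gen 0)) \<circ> qld m (ev m (Gen 1)) \<circ> qld m (ev m (Gen 0)))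
        (qm m (ev m (Gen 0)) \<circ> qm m (ev m (Gen 1)) \<circ> qld m (ev m (Gen 0)) \<circ> qld m (ev m (Gen 1)))"
      using cov_comm[OF Lg_in[of 1 n] Lg_in[of 0 n] cov_Lg[of m 1 n] cov_Lg[of m 0 n]] Suc True
      by simp
    then have "cov n m (chain n 1) (T (gk m 1)) (T (\<lambda>b. - gk m 1 b))"
      by (rule cov_cong) (rule base_F, use Suc in simp, rule base_B, use Suc in simp)
    then show ?thesis using True by simp
  next
    case False
    have ih: "cov n m (chain n k) (T (gk m k)) (T (\<lambda>b. - gk m k b))" using Suc False by simp
    have "cov n m (chain n (Suc k)) (qm m (ev m (Gen (Suc k))) \<circ> T (gk m k) \<circ> qld m (ev m (Gen (Suc k))) \<circ> T (\<lambda>b. - gk m k b))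
        (T (gk m k) \<circ> qm m (ev m (Gen (Suc k))) \<circ> T (\<lambda>b. - gk m k b) \<circ> qld m (ev m (Gen (Suc k))))"
      using cov_comm[OF Lg_in[of "Suc k" n] conjunct1[OF chain_in[of k n]] cov_Lg[of m "Suc k" n] ih] Suc
      by simp
    then show ?thesis
      by (rule cov_cong) (rule step_F, use Suc in simp, rule step_B, use Suc in simp)
  qed
qed

lemma main_exists: assumes n: "n \<ge> 2"
  shows "\<exists>c\<in>gamma_aux (LM n) (n - 2). c \<noteq> \<one>\<^bsub>LM n\<^esub>"
proof -
  let ?U0 = "lcos (free_loop n) (lclass E) (F3 n)"
  have E: "lclass E \<in> carrier (free_loop n)" by (rule F_in) simp
  have U0: "?U0 \<in> carrier (GQ n)" using QC_eq E by auto
  have one: "\<one>\<^bsub>LM n\<^esub> ?U0 = ?U0" using U0 LM_one by simp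
  have hb: "m \<ge> 1 \<Longrightarrow> hbar n m ?U0 = qe" for m using hbar_lcos[OF _ E] by (simp add: Phi_class)
  show ?thesis
  proof (cases "n = 2")
    case True
    have c: "chain n 0 \<in> gamma_aux (LM n) 0" using chain_in[of 0 n] n by simp
    have "hbar n 1 (chain n 0 ?U0) = qm 1 (ev 1 (Gen 0)) qe"
      using cov_Lg[of 1 0 n] n U0 hb[of 1] unfolding cov_def by simp
    then have "fst (hbar n 1 (chain n 0 ?U0)) 0 = 1" by (simp add: qm_def qe_def)
    moreover have "fst (hbar n 1 ?U0) 0 = 0" using hb[of 1] by (simp add: qe_def)
    ultimately have "chain n 0 ?U0 \<noteq> ?U0" by auto
    then have "chain n 0 \<noteq> \<one>\<^bsub>LM n\<^esub>" using one by metis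
    then show ?thesis using c True by auto
  next
    case False
    define m where "m = n - 2"
    have m: "m \<ge> 1" "m < n" using n False by (auto simp: m_def)
    have c: "chain n m \<in> gamma_aux (LM n) m" using chain_in[of m n] m by simp
    have "hbar n m (chain n m ?U0) = T (gk m m) qe"
      using chain_cov[of m m n] m U0 hb[of m] unfolding cov_def by simp
    then have "snd (hbar n m (chain n m ?U0)) = (-1)^m" by (simp add: T_def gk_def P_empty qe_def)
    moreover have "snd (hbar n m ?U0) = 0" using hb[of m] m by (simp add: qe_def)
    ultimately have "chain n m ?U0 \<noteq> ?U0" by auto
    then have "chain n m \<noteq> \<one>\<^bsub>LM n\<^esub>" using one by metis
    then show ?thesis using c m_def by auto
  qed
qed

theorem lemma4p2:
  fixes n :: nat
  assumes "n \<ge> 2"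
  shows "gamma (LMlt (quot_loop (free_loop n) (bruck_lcs (free_loop n) 3))) (n - 1)
           \<noteq> {\<one>\<^bsub>LMlt (quot_loop (free_loop n) (bruck_lcs (free_loop n) 3))\<^esub>}"
proof -
  have b: "bruck_lcs (free_loop n) 3 = F3 n" by (simp add: bruck_lcs_def)
  have g: "gamma (LM n) (n - 1) = gamma_aux (LM n) (n - 2)" by (simp add: gamma_def numeral_2_eq_2)
  show ?thesis unfolding b g using main_exists[OF assms] by auto
qed


end
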